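(* For a graph $G=(V,E)$ and integer $\tau\ge 1$ define $$Q_{\mathrm{Del\text{-}Deg}}(G,\tau)=-\tfrac12\sum_{v\in V,\ \deg_G(v)\ge\tau}(\deg_G(v)-\tau).$$ Then: (1) for fixed $G$, $Q_{\mathrm{Del\text{-}Deg}}(G,\tau)$ is non-decreasing in $\tau$ and equals $0$ for all $\tau\ge\deg(G)$; (2) for any two graphs $G,G'$ that differ in exactly one edge, $|Q_{\mathrm{Del\text{-}Deg}}(G,\tau)-Q_{\mathrm{Del\text{-}Deg}}(G',\tau)|\le 1$ for all $\tau$, i.e., its global sensitivity under edge neighboring is $1$; (3) if $G'$ is obtained from $G$ by adding one edge, then $Q_{\mathrm{Del\text{-}Deg}}(G,\tau)\ge Q_{\mathrm{Del\text{-}Deg}}(G',\tau)$ for every $\tau$.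
   Context: Graphs are finite, simple and undirected. $\deg_G(v)$ denotes the degree of node $v$ in $G$ and $\deg(G)=\max_{v}\deg_G(v)$ is the maximum degree. *)

theory Defs
  imports Complex_Main
begin

definition simple_graph :: "'a set \<Rightarrow> 'a set set \<Rightarrow> bool" where
  "simple_graph V E \<longleftrightarrow> finite V \<and> (\<forall>e\<in>E. e \<subseteq> V \<and> card e = 2)"

definition deg :: "'a set set \<Rightarrow> 'a \<Rightarrow> nat" where
  "deg E v = card {e \<in> E. v \<in> e}"

definition max_deg :: "'a set \<Rightarrow> 'a set set \<Rightarrow> nat" where
  "max_deg V E = (if V = {} then 0 else Max (deg E ` V))"

definition Q_del_deg :: "'a set \<Rightarrow> 'a set set \<Rightarrow> nat \<Rightarrow> real" where
  "Q_del_deg V E \<tau> = - (1/2) * (\<Sum>v \<in> {v \<in> V. deg E v \<ge> \<tau>}. (real (deg E v) - real \<tau>))"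

end

theory Submission
  imports Defs
begin

definition ff :: "nat \<Rightarrow> nat \<Rightarrow> real" where
  "ff \<tau> d = max 0 (real d - real \<tau>)"

lemma Q_alt: "finite V \<Longrightarrow> Q_del_deg V E \<tau> = - (1/2) * (\<Sum>v\<in>V. ff \<tau> (deg E v))"
proof -
  assume fV: "finite V"
  have "(\<Sum>v \<in> {v \<in> V. deg E v \<ge> \<tau>}. (real (deg E v) - real \<tau>)) = (\<Sum>v \<in> {v \<in> V. deg E v \<ge> \<tau>}. ff \<tau> (deg E v))"
    by (rule sum.cong) (auto simp: ff_def)
  also have "\<dots> = (\<Sum>v\<in>V. ff \<tau> (deg E v))"
    using fV by (intro sum.mono_neutral_left) (auto simp: ff_def)
  finally show ?thesis unfolding Q_del_deg_def by simp
qed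

lemma fin_E: "simple_graph V E \<Longrightarrow> finite E"
  unfolding simple_graph_def by (meson Pow_iff finite_Pow_iff finite_subset subsetI)

lemma deg_insert: "finite E \<Longrightarrow> e \<notin> E \<Longrightarrow> deg (insert e E) v = deg E v + (if v \<in> e then 1 else 0)"
proof -
  assume a: "finite E" "e \<notin> E"
  show ?thesis
  proof (cases "v \<in> e")
    case True
    then have "{x \<in> insert e E. v \<in> x} = insert e {x \<in> E. v \<in> x}" by auto
    then show ?thesis using a True unfolding deg_def by simp
  next
    case False
    then have "{x \<in> insert e E. v \<in> x} = {x \<in> E. v \<in> x}" by auto
    then show ?thesis using False unfolding deg_def by simp
  qed
qed

lemma key:
  assumes "simple_graph V E" "simple_graph V (insert e E)" "e \<notin> E"
  shows "0 \<le> (\<Sum>v\<in>V. ff \<tau> (deg (insert e E) v)) - (\<Sum>v\<in>V. ff \<tau> (deg E v))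
       \<and> (\<Sum>v\<in>V. ff \<tau> (deg (insert e E) v)) - (\<Sum>v\<in>V. ff \<tau> (deg E v)) \<le> 2"
proof -
  have fV: "finite V" using assms unfolding simple_graph_def by auto
  have fE: "finite E" using fin_E assms(1) .
  have eV: "e \<subseteq> V" and ce: "card e = 2" using assms(2) unfolding simple_graph_def by auto
  have fe: "finite e" using ce card.infinite by fastforce
  define g where "g v = ff \<tau> (deg (insert e E) v) - ff \<tau> (deg E v)" for v
  have D: "(\<Sum>v\<in>V. ff \<tau> (deg (insert e E) v)) - (\<Sum>v\<in>V. ff \<tau> (deg E v)) = (\<Sum>v\<in>V. g v)"
    unfolding g_def by (simp add: sum_subtractf)
  have g0: "\<And>v. v \<notin> e \<Longrightarrow> g v = 0" unfolding g_def using deg_insert[OF fE assms(3)] by simp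
  have gb: "\<And>v. 0 \<le> g v \<and> g v \<le> 1" unfolding g_def ff_def using deg_insert[OF fE assms(3)] by auto
  have "(\<Sum>v\<in>V. g v) = (\<Sum>v\<in>e. g v)"
    using fV eV g0 by (intro sum.mono_neutral_right) auto
  moreover have "(\<Sum>v\<in>e. g v) \<le> 2"
    using sum_bounded_above[of e g 1] gb ce by simp
  moreover have "0 \<le> (\<Sum>v\<in>e. g v)" using gb by (simp add: sum_nonneg)
  ultimately show ?thesis unfolding D by linarith
qed

theorem mainTheorem2:
  shows
   "(\<forall>(V :: 'a set) E. simple_graph V E \<longrightarrow>
        (\<forall>\<tau> \<tau>'. 1 \<le> \<tau> \<and> \<tau> \<le> \<tau>' \<longrightarrow> Q_del_deg V E \<tau> \<le> Q_del_deg V E \<tau>') \<and>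
        (\<forall>\<tau>. 1 \<le> \<tau> \<and> max_deg V E \<le> \<tau> \<longrightarrow> Q_del_deg V E \<tau> = 0))
    \<and> (\<forall>(V :: 'a set) E E'. simple_graph V E \<and> simple_graph V E' \<and>
          card ((E - E') \<union> (E' - E)) = 1 \<longrightarrow>
        (\<forall>\<tau>. 1 \<le> \<tau> \<longrightarrow> \<bar>Q_del_deg V E \<tau> - Q_del_deg V E' \<tau>\<bar> \<le> 1))
    \<and> (\<forall>(V :: 'a set) E e. simple_graph V E \<and> simple_graph V (insert e E) \<and> e \<notin> E \<longrightarrow>
        (\<forall>\<tau>. 1 \<le> \<tau> \<longrightarrow> Q_del_deg V E \<tau> \<ge> Q_del_deg V (insert e E) \<tau>))"
proof (intro conjI allI impI)
  fix V :: "'a set" and E and \<tau> \<tau>' :: nat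
  assume g: "simple_graph V E" and t: "1 \<le> \<tau> \<and> \<tau> \<le> \<tau>'"
  have fV: "finite V" using g unfolding simple_graph_def by auto
  have "(\<Sum>v\<in>V. ff \<tau>' (deg E v)) \<le> (\<Sum>v\<in>V. ff \<tau> (deg E v))"
    using t by (intro sum_mono) (auto simp: ff_def)
  then show "Q_del_deg V E \<tau> \<le> Q_del_deg V E \<tau>'" using fV by (simp add: Q_alt)
next
  fix V :: "'a set" and E and \<tau> :: nat
  assume g: "simple_graph V E" and t: "1 \<le> \<tau> \<and> max_deg V E \<le> \<tau>"
  have fV: "finite V" using g unfolding simple_graph_def by auto
  have "\<And>v. v \<in> V \<Longrightarrow> deg E v \<le> \<tau>"
  proof -
    fix v assume "v \<in> V"
    then have "deg E v \<le> max_deg V E" unfolding max_deg_def using fV by auto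
    then show "deg E v \<le> \<tau>" using t by simp
  qed
  then have "(\<Sum>v\<in>V. ff \<tau> (deg E v)) = 0" by (intro sum.neutral) (auto simp: ff_def)
  then show "Q_del_deg V E \<tau> = 0" using fV by (simp add: Q_alt)
next
  fix V :: "'a set" and E E' \<tau>
  assume a: "simple_graph V E \<and> simple_graph V E' \<and> card ((E - E') \<union> (E' - E)) = 1"
    and t: "1 \<le> (\<tau>::nat)"
  have fV: "finite V" using a unfolding simple_graph_def by auto
  obtain e where e: "(E - E') \<union> (E' - E) = {e}" using a card_1_singletonE by blast
  have h: "\<And>x. ((x \<in> E \<and> x \<notin> E') \<or> (x \<in> E' \<and> x \<notin> E)) = (x = e)"
    using e by (simp add: set_eq_iff)
  show "\<bar>Q_del_deg V E \<tau> - Q_del_deg V E' \<tau>\<bar> \<le> 1"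
  proof (cases "e \<in> E")
    case True
    then have E: "E = insert e E'" "e \<notin> E'" using h True by (auto simp del: insert_iff)
    have k: "0 \<le> (\<Sum>v\<in>V. ff \<tau> (deg E v)) - (\<Sum>v\<in>V. ff \<tau> (deg E' v))
       \<and> (\<Sum>v\<in>V. ff \<tau> (deg E v)) - (\<Sum>v\<in>V. ff \<tau> (deg E' v)) \<le> 2"
      using key[of V E' e \<tau>] a E by simp
    show ?thesis unfolding Q_alt[OF fV] using k by linarith
  next
    case False
    then have E: "E' = insert e E" "e \<notin> E" using h False by (auto simp del: insert_iff) (metis h)
    have k: "0 \<le> (\<Sum>v\<in>V. ff \<tau> (deg E' v)) - (\<Sum>v\<in>V. ff \<tau> (deg E v))
       \<and> (\<Sum>v\<in>V. ff \<tau> (deg E' v)) - (\<Sum>v\<in>V. ff \<tau> (deg E v)) \<le> 2"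
      using key[of V E e \<tau>] a E by simp
    show ?thesis unfolding Q_alt[OF fV] using k by linarith
  qed
next
  fix V :: "'a set" and E e \<tau>
  assume a: "simple_graph V E \<and> simple_graph V (insert e E) \<and> e \<notin> E" and t: "1 \<le> (\<tau>::nat)"
  have fV: "finite V" using a unfolding simple_graph_def by auto
  show "Q_del_deg V E \<tau> \<ge> Q_del_deg V (insert e E) \<tau>"
    using key[of V E e \<tau>] a unfolding Q_alt[OF fV] by linarith
qed

end
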